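(* Let $0<q\leq 1$, $1\leq r\leq\infty$, $\varepsilon\geq 0$, $A\in\mathbb{R}^{m\times n}$, $D\in\mathbb{R}^{n\times d}$, $y\in\mathbb{R}^m$, and let $s$ be a positive integer. Let $\hat{f}$ be a solution of $$\min_{\tilde{f}\in\mathbb{R}^n}\|D^*\tilde{f}\|_q\quad\text{subject to}\quad\|A\tilde{f}-y\|_r\leq\varepsilon,$$ let $f\in\mathbb{R}^n$ satisfy $\|Af-y\|_r\leq\varepsilon$, and let $h=\hat{f}-f$. Let $\Omega$ be the index set of the $s$ largest entries of $D^*f$ in magnitude, and $T$ the index set of the $s$ largest entries of $D^*h$ in magnitude. Then $$\|Ah\|_q^q\leq m^{1-q/r}(2\varepsilon)^q$$ and $$\|D^*_{T^c}h\|_q^q\leq\|D^*_{T}h\|_q^q+2\|D^*_{\Omega^c}f\|_q^q.$$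
   Context: For $S\subset[d]$, $D_S^*x$ denotes the vector $D^*x$ restricted to the indices in $S$ (other entries zero), and $S^c=[d]\setminus S$. $\|u\|_q^q=\sum_j|u_j|^q$; $\|u\|_\infty=\max_j|u_j|$. *)

theory Defs
  imports "HOL-Analysis.Analysis" "HOL-Library.Extended_Real"
begin

definition lq_pow :: "real \<Rightarrow> real ^ 'k \<Rightarrow> real" where
  "lq_pow q u = (\<Sum>j\<in>UNIV. \<bar>u $ j\<bar> powr q)"

definition lr_norm :: "ereal \<Rightarrow> real ^ 'k \<Rightarrow> real" where
  "lr_norm r u = (if r = \<infinity> then Max (range (\<lambda>j. \<bar>u $ j\<bar>))
                  else (\<Sum>j\<in>UNIV. \<bar>u $ j\<bar> powr real_of_ereal r) powr (1 / real_of_ereal r))"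

definition q_over_r :: "real \<Rightarrow> ereal \<Rightarrow> real" where
  "q_over_r q r = (if r = \<infinity> then 0 else q / real_of_ereal r)"

definition restr :: "'k set \<Rightarrow> real ^ 'k \<Rightarrow> real ^ 'k" where
  "restr S v = (\<chi> i. if i \<in> S then v $ i else 0)"

definition top_s_set :: "nat \<Rightarrow> real ^ 'k \<Rightarrow> 'k set \<Rightarrow> bool" where
  "top_s_set s v S \<longleftrightarrow> card S = min s CARD('k) \<and>
     (\<forall>i\<in>S. \<forall>j. j \<notin> S \<longrightarrow> \<bar>v $ j\<bar> \<le> \<bar>v $ i\<bar>)"

end

theory Submission
  imports Defs
begin

lemma powr_convex0:
  fixes p :: real assumes p: "p \<ge> 1"
  shows "convex_on {0..} (\<lambda>x::real. x powr p)"
proof (rule convex_onI)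
  show "convex {0::real..}" by (simp add: convex_real_interval)
  fix t x y :: real assume t: "0 < t" "t < 1" and xy: "x \<in> {0..}" "y \<in> {0..}"
  show "((1 - t) *\<^sub>R x + t *\<^sub>R y) powr p \<le> (1 - t) * x powr p + t * y powr p"
  proof (cases "x = 0 \<or> y = 0")
    case True
    have k: "c powr p \<le> c" if "0 \<le> c" "c \<le> 1" for c :: real
    proof -
      have "c powr p \<le> c powr 1" using that p by (intro powr_mono') auto
      thus ?thesis using that by simp
    qed
    show ?thesis
    proof (cases "x = 0")
      case True
      have "(t * y) powr p = t powr p * y powr p" using t xy by (simp add: powr_mult)
      also have "\<dots> \<le> t * y powr p" using k[of t] t by (intro mult_right_mono) auto
      finally show ?thesis using True p by simp
    next
      case False
      then have "y = 0" using \<open>x = 0 \<or> y = 0\<close> by simp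
      have "((1-t) * x) powr p = (1-t) powr p * x powr p" using t xy by (simp add: powr_mult)
      also have "\<dots> \<le> (1-t) * x powr p" using k[of "1-t"] t by (intro mult_right_mono) auto
      finally show ?thesis using \<open>y = 0\<close> p by simp
    qed
  next
    case False
    then have "x \<in> {0<..}" "y \<in> {0<..}" using xy by auto
    from convex_onD[OF powr_convex[OF p], of t x y, OF _ _ this] t
    show ?thesis by simp
  qed
qed

lemma jensen_avg:
  fixes a :: "'a \<Rightarrow> real" and p :: real
  assumes "finite S" "S \<noteq> {}" "\<And>i. i \<in> S \<Longrightarrow> a i \<ge> 0" "p \<ge> 1"
  shows "((\<Sum>i\<in>S. a i) / card S) powr p \<le> (\<Sum>i\<in>S. a i powr p) / card S"
proof -
  have c: "card S > 0" using assms by (simp add: card_gt_0_iff)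
  have "(\<Sum>i\<in>S. (1 / card S) *\<^sub>R a i) powr p \<le> (\<Sum>i\<in>S. (1 / card S) * a i powr p)"
    using convex_on_sum[OF assms(1,2) powr_convex0[OF assms(4)], of "\<lambda>_. 1 / card S" a] c assms(3)
    by auto
  thus ?thesis by (simp add: sum_divide_distrib[symmetric] sum_distrib_left[symmetric] field_simps)
qed


lemma power_mean:
  fixes u :: "'k::finite \<Rightarrow> real" and q r B :: real
  assumes q: "0 < q" "q \<le> r" and B: "B \<ge> 0"
    and sr: "(\<Sum>j\<in>UNIV. \<bar>u j\<bar> powr r) \<le> B powr r"
  shows "(\<Sum>j\<in>UNIV. \<bar>u j\<bar> powr q) \<le> real CARD('k) powr (1 - q / r) * B powr q"
proof -
  define m where "m = real CARD('k)"
  have m: "m > 0" unfolding m_def by simp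
  define a where "a j = \<bar>u j\<bar> powr q" for j
  have r0: "r > 0" using q by simp
  have ap: "a j powr (r/q) = \<bar>u j\<bar> powr r" for j
    unfolding a_def using q by (simp add: powr_powr)
  have J: "((\<Sum>j\<in>UNIV. a j) / m) powr (r/q) \<le> (\<Sum>j\<in>UNIV. \<bar>u j\<bar> powr r) / m"
    using jensen_avg[of UNIV a "r/q"] q unfolding m_def ap by (auto simp: a_def)
  also have "\<dots> \<le> B powr r / m" using sr m by (simp add: divide_right_mono)
  finally have J2: "((\<Sum>j\<in>UNIV. a j) / m) powr (r/q) \<le> B powr r / m" .
  have s0: "(\<Sum>j\<in>UNIV. a j) / m \<ge> 0" using m by (simp add: a_def sum_nonneg)
  have "(\<Sum>j\<in>UNIV. a j) / m = (((\<Sum>j\<in>UNIV. a j) / m) powr (r/q)) powr (q/r)"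
  proof -
    have e: "(r/q)*(q/r) = 1" using q r0 by simp
    show ?thesis by (simp only: powr_powr e powr_one[OF s0])
  qed
  also have "\<dots> \<le> (B powr r / m) powr (q/r)"
    using J2 q r0 by (intro powr_mono2) auto
  also have "\<dots> = B powr q / m powr (q/r)"
    using B m r0 by (simp add: powr_divide powr_powr)
  finally have "(\<Sum>j\<in>UNIV. a j) \<le> m * (B powr q / m powr (q/r))"
    using m by (simp add: field_simps)
  also have "\<dots> = m powr (1 - q/r) * B powr q"
    using m by (simp add: powr_diff field_simps)
  finally show ?thesis unfolding a_def m_def .
qed

lemma r_triangle:
  fixes a b :: "'k::finite \<Rightarrow> real" and r e :: real
  assumes r: "r \<ge> 1" and e: "e \<ge> 0"
    and ha: "(\<Sum>j\<in>UNIV. \<bar>a j\<bar> powr r) \<le> e powr r"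
    and hb: "(\<Sum>j\<in>UNIV. \<bar>b j\<bar> powr r) \<le> e powr r"
  shows "(\<Sum>j\<in>UNIV. \<bar>a j - b j\<bar> powr r) \<le> (2 * e) powr r"
proof -
  have pt: "\<bar>a j - b j\<bar> powr r \<le> 2 powr r * ((1 - 1/2) * \<bar>a j\<bar> powr r + (1/2) * \<bar>b j\<bar> powr r)" for j
  proof -
    have "\<bar>a j - b j\<bar> powr r \<le> (2 * ((1 - 1/2) *\<^sub>R \<bar>a j\<bar> + (1/2) *\<^sub>R \<bar>b j\<bar>)) powr r"
      using r by (intro powr_mono2) auto
    also have "\<dots> = 2 powr r * ((1 - 1/2) *\<^sub>R \<bar>a j\<bar> + (1/2) *\<^sub>R \<bar>b j\<bar>) powr r"
      by (subst powr_mult) auto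
    also have "\<dots> \<le> 2 powr r * ((1 - 1/2) * \<bar>a j\<bar> powr r + (1/2) * \<bar>b j\<bar> powr r)"
      using convex_onD[OF powr_convex0[OF r], of "1/2" "\<bar>a j\<bar>" "\<bar>b j\<bar>"]
      by (intro mult_left_mono) auto
    finally show ?thesis .
  qed
  have "(\<Sum>j\<in>UNIV. \<bar>a j - b j\<bar> powr r) \<le> (\<Sum>j\<in>UNIV. 2 powr r * ((\<bar>a j\<bar> powr r + \<bar>b j\<bar> powr r) / 2))"
    using pt by (intro sum_mono) (simp add: add_divide_distrib)
  also have "\<dots> = 2 powr r * (((\<Sum>j\<in>UNIV. \<bar>a j\<bar> powr r) + (\<Sum>j\<in>UNIV. \<bar>b j\<bar> powr r)) / 2)"
    by (simp add: sum_distrib_left[symmetric] sum_divide_distrib[symmetric] sum.distrib)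
  also have "\<dots> \<le> 2 powr r * ((e powr r + e powr r) / 2)"
    using ha hb by (intro mult_left_mono) auto
  also have "\<dots> = (2 * e) powr r" using e by (simp add: powr_mult)
  finally show ?thesis .
qed

lemma q_triangle:
  fixes a b q :: real assumes q: "0 < q" "q \<le> 1" and ab: "a \<ge> 0" "b \<ge> 0"
  shows "(a + b) powr q \<le> a powr q + b powr q"
proof (cases "a + b = 0")
  case True then show ?thesis using ab by simp
next
  case False
  then have s: "a + b > 0" using ab by simp
  have k: "c \<le> c powr q" if "0 \<le> c" "c \<le> 1" for c :: real
  proof -
    have "c powr 1 \<le> c powr q" using that q by (intro powr_mono') auto
    thus ?thesis using that by simp
  qed
  have "1 = a / (a+b) + b / (a+b)" using s by (simp add: add_divide_distrib[symmetric])
  also have "\<dots> \<le> (a/(a+b)) powr q + (b/(a+b)) powr q"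
    using ab s by (intro add_mono k) auto
  also have "\<dots> = (a powr q + b powr q) / (a+b) powr q"
    using ab s by (simp add: powr_divide add_divide_distrib)
  moreover have P: "(a+b) powr q > 0" using s by simp
  ultimately show ?thesis by (simp add: le_divide_eq)
qed


lemma top_sum:
  fixes g :: "'k::finite \<Rightarrow> real"
  assumes c: "card T = card W" and top: "\<forall>i\<in>T. \<forall>j. j \<notin> T \<longrightarrow> g j \<le> g i"
  shows "sum g W \<le> sum g T"
proof -
  have cT: "card T = card (T \<inter> W) + card (T - W)"
    by (rule card_Int_Diff) simp
  have cO: "card W = card (T \<inter> W) + card (W - T)"
    using card_Int_Diff[of W T] by (simp add: inf_commute)
  have cc: "card (W - T) = card (T - W)" using c cT cO by simp
  have main: "sum g (W - T) \<le> sum g (T - W)"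
  proof (cases "T - W = {}")
    case True
    then have "card (W - T) = 0" using cc by simp
    then have "W - T = {}" by simp
    then show ?thesis using True by simp
  next
    case False
    define c where "c = Min (g ` (T - W))"
    have "sum g (W - T) \<le> of_nat (card (W - T)) * c"
    proof (rule sum_bounded_above)
      fix j assume j: "j \<in> W - T"
      show "g j \<le> c" unfolding c_def using False j top by (subst Min_ge_iff) auto
    qed
    also have "\<dots> = of_nat (card (T - W)) * c" using cc by simp
    also have "\<dots> \<le> sum g (T - W)"
      by (rule sum_bounded_below) (auto simp: c_def)
    finally show ?thesis .
  qed
  have "sum g W = sum g (W \<inter> T) + sum g (W - T)" by (simp add: sum.Int_Diff)
  moreover have "sum g T = sum g (T \<inter> W) + sum g (T - W)" by (simp add: sum.Int_Diff)
  ultimately show ?thesis using main by (simp add: inf_commute)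
qed

lemma lq_restr: "lq_pow q (restr S v) = (\<Sum>j\<in>S. \<bar>v $ j\<bar> powr q)"
proof -
  have "lq_pow q (restr S v) = (\<Sum>j\<in>UNIV. if j \<in> S then \<bar>v $ j\<bar> powr q else 0)"
    unfolding lq_pow_def by (rule sum.cong) (auto simp: restr_def)
  then show ?thesis
    using sum.inter_restrict[of UNIV "\<lambda>j. \<bar>v $ j\<bar> powr q" S] by simp
qed

lemma lq_split: "lq_pow q v = lq_pow q (restr S v) + lq_pow q (restr (- S) v)"
  unfolding lq_restr
  using sum.subset_diff[of S UNIV "\<lambda>j. \<bar>v $ j\<bar> powr q"]
  by (simp only: lq_pow_def) (simp add: Compl_eq_Diff_UNIV add.commute)

lemma ereal_ge1_real: "1 \<le> (r::ereal) \<Longrightarrow> r \<noteq> \<infinity> \<Longrightarrow> 1 \<le> real_of_ereal r"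
  by (cases r) auto

theorem lemma2p9:
  fixes q :: real and r :: ereal and \<epsilon> :: real
    and A :: "real ^ 'n ^ 'm" and D :: "real ^ 'd ^ 'n" and y :: "real ^ 'm"
    and s :: nat and fhat f :: "real ^ 'n" and \<Omega> T :: "'d set"
  assumes "0 < q" "q \<le> 1" "1 \<le> r" "\<epsilon> \<ge> 0" "s > 0"
    and fhat_feas: "lr_norm r (A *v fhat - y) \<le> \<epsilon>"
    and fhat_min: "\<forall>g. lr_norm r (A *v g - y) \<le> \<epsilon> \<longrightarrow>
                       lq_pow q (transpose D *v fhat) \<le> lq_pow q (transpose D *v g)"
    and f_feas: "lr_norm r (A *v f - y) \<le> \<epsilon>"
    and \<Omega>: "top_s_set s (transpose D *v f) \<Omega>"
    and T: "top_s_set s (transpose D *v (fhat - f)) T"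
  shows "lq_pow q (A *v (fhat - f)) \<le> real CARD('m) powr (1 - q_over_r q r) * (2 * \<epsilon>) powr q
         \<and> lq_pow q (restr (- T) (transpose D *v (fhat - f)))
           \<le> lq_pow q (restr T (transpose D *v (fhat - f)))
             + 2 * lq_pow q (restr (- \<Omega>) (transpose D *v f))"
proof
  define a where "a = A *v fhat - y"
  define b where "b = A *v f - y"
  have u: "A *v (fhat - f) = a - b" unfolding a_def b_def by (simp add: matrix_vector_mult_diff_distrib)
  show "lq_pow q (A *v (fhat - f)) \<le> real CARD('m) powr (1 - q_over_r q r) * (2 * \<epsilon>) powr q"
  proof (cases "r = \<infinity>")
    case True
    have bnd: "\<bar>w $ j\<bar> \<le> \<epsilon>" if "lr_norm r w \<le> \<epsilon>" for w :: "real ^ 'm" and j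
    proof -
      have "\<bar>w $ j\<bar> \<le> Max (range (\<lambda>j. \<bar>w $ j\<bar>))" by (rule Max_ge) auto
      thus ?thesis using that True unfolding lr_norm_def by simp
    qed
    have "\<bar>(a - b) $ j\<bar> powr q \<le> (2 * \<epsilon>) powr q" for j
    proof -
      have h1: "\<bar>a $ j\<bar> \<le> \<epsilon>" using bnd fhat_feas unfolding a_def by blast
      have h2: "\<bar>b $ j\<bar> \<le> \<epsilon>" using bnd f_feas unfolding b_def by blast
      have "\<bar>(a - b) $ j\<bar> = \<bar>a $ j - b $ j\<bar>" by simp
      then have "\<bar>(a - b) $ j\<bar> \<le> 2 * \<epsilon>"
        using abs_triangle_ineq4[of "a $ j" "b $ j"] h1 h2 by linarith
      thus ?thesis using assms(1) by (intro powr_mono2) auto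
    qed
    then have "lq_pow q (a - b) \<le> of_nat (card (UNIV::'m set)) * (2 * \<epsilon>) powr q"
      unfolding lq_pow_def by (intro sum_bounded_above) auto
    then show ?thesis using True u by (simp add: q_over_r_def)
  next
    case False
    define R where "R = real_of_ereal r"
    have R: "1 \<le> R" unfolding R_def using ereal_ge1_real[OF assms(3) False] .
    have bnd: "(\<Sum>j\<in>UNIV. \<bar>w $ j\<bar> powr R) \<le> \<epsilon> powr R" if "lr_norm r w \<le> \<epsilon>" for w :: "real ^ 'm"
    proof -
      define S where "S = (\<Sum>j\<in>UNIV. \<bar>w $ j\<bar> powr R)"
      have S0: "S \<ge> 0" unfolding S_def by (simp add: sum_nonneg)
      have le: "S powr (1/R) \<le> \<epsilon>" using that False unfolding lr_norm_def S_def R_def by simp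
      have e: "(1/R) * R = 1" using R by simp
      have "S = (S powr (1/R)) powr R" by (simp only: powr_powr e powr_one[OF S0])
      also have "\<dots> \<le> \<epsilon> powr R" using le R by (intro powr_mono2) auto
      finally show ?thesis unfolding S_def .
    qed
    have tri: "(\<Sum>j\<in>UNIV. \<bar>a $ j - b $ j\<bar> powr R) \<le> (2 * \<epsilon>) powr R"
      using r_triangle[of R \<epsilon> "\<lambda>j. a $ j" "\<lambda>j. b $ j"] R assms(4)
        bnd[OF fhat_feas[folded a_def]] bnd[OF f_feas[folded b_def]] by simp
    have "(\<Sum>j\<in>UNIV. \<bar>a $ j - b $ j\<bar> powr q) \<le> real CARD('m) powr (1 - q / R) * (2 * \<epsilon>) powr q"
      using power_mean[of q R "2 * \<epsilon>" "\<lambda>j. a $ j - b $ j"] tri assms(1,2,4) R by simp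
    then show ?thesis using False u unfolding q_over_r_def R_def lq_pow_def by simp
  qed
next
  define x where "x = transpose D *v f"
  define z where "z = transpose D *v (fhat - f)"
  have xz: "transpose D *v fhat = x + z"
    unfolding x_def z_def by (simp add: matrix_vector_mult_diff_distrib)
  have "lq_pow q (transpose D *v fhat) \<le> lq_pow q (transpose D *v f)"
    using fhat_min f_feas by blast
  then have min: "lq_pow q (x + z) \<le> lq_pow q x"
    by (simp only: xz x_def)
  define P where "P v S = (\<Sum>j\<in>S. \<bar>v $ j\<bar> powr q)" for v :: "real ^ 'd" and S
  have qt1: "\<bar>x $ j\<bar> powr q - \<bar>z $ j\<bar> powr q \<le> \<bar>(x + z) $ j\<bar> powr q" for j
  proof -
    have "\<bar>x $ j\<bar> powr q \<le> (\<bar>(x + z) $ j\<bar> + \<bar>z $ j\<bar>) powr q"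
      using assms(1) by (intro powr_mono2) auto
    also have "\<dots> \<le> \<bar>(x + z) $ j\<bar> powr q + \<bar>z $ j\<bar> powr q"
      using q_triangle assms(1,2) by simp
    finally show ?thesis by simp
  qed
  have qt2: "\<bar>z $ j\<bar> powr q - \<bar>x $ j\<bar> powr q \<le> \<bar>(x + z) $ j\<bar> powr q" for j
  proof -
    have "\<bar>z $ j\<bar> powr q \<le> (\<bar>(x + z) $ j\<bar> + \<bar>x $ j\<bar>) powr q"
      using assms(1) by (intro powr_mono2) auto
    also have "\<dots> \<le> \<bar>(x + z) $ j\<bar> powr q + \<bar>x $ j\<bar> powr q"
      using q_triangle assms(1,2) by simp
    finally show ?thesis by simp
  qed
  have s1: "P x \<Omega> - P z \<Omega> \<le> P (x + z) \<Omega>"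
    unfolding P_def sum_subtractf[symmetric] by (intro sum_mono qt1)
  have s2: "P z (- \<Omega>) - P x (- \<Omega>) \<le> P (x + z) (- \<Omega>)"
    unfolding P_def sum_subtractf[symmetric] by (intro sum_mono qt2)
  have spl: "lq_pow q v = P v S + P v (- S)" for v S
    using lq_split[of q v S] unfolding lq_restr P_def .
  have cone1: "P z (- \<Omega>) \<le> P z \<Omega> + 2 * P x (- \<Omega>)"
    using min s1 s2 spl[of "x + z" \<Omega>] spl[of x \<Omega>] by simp
  have topT: "P z \<Omega> \<le> P z T"
    unfolding P_def
  proof (rule top_sum)
    show "card T = card \<Omega>" using T \<Omega> unfolding top_s_set_def z_def x_def by simp
    show "\<forall>i\<in>T. \<forall>j. j \<notin> T \<longrightarrow> \<bar>z $ j\<bar> powr q \<le> \<bar>z $ i\<bar> powr q"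
    proof (intro ballI allI impI)
      fix i j assume "i \<in> T" "j \<notin> T"
      then have "\<bar>z $ j\<bar> \<le> \<bar>z $ i\<bar>" using T unfolding top_s_set_def z_def by blast
      then show "\<bar>z $ j\<bar> powr q \<le> \<bar>z $ i\<bar> powr q" using assms(1) by (intro powr_mono2) auto
    qed
  qed
  have "P z (- T) \<le> P z (- \<Omega>)"
    using topT spl[of z T] spl[of z \<Omega>] by simp
  then show "lq_pow q (restr (- T) (transpose D *v (fhat - f)))
           \<le> lq_pow q (restr T (transpose D *v (fhat - f)))
             + 2 * lq_pow q (restr (- \<Omega>) (transpose D *v f))"
    using cone1 topT unfolding lq_restr x_def[symmetric] z_def[symmetric] P_def by simp
qed

end
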